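(* Let $G$ be a finite group, let $k \leq m(G)$, and let $s=(g_1,\dots,g_k)$ be an irredundant generating sequence for $G$. Suppose that for every corresponding collection $(M_1,\dots,M_k)$ of maximal subgroups in general position there exists $r \in \{1,\dots,k\}$ such that: (1) $M_r = \langle g_i : i \neq r\rangle$; (2) $m(M_r) = k-1$; (3) $M_r$ satisfies the replacement property. Then $s$ satisfies the replacement property.
   Context: For a finite group $G$, a finite sequence $s=(g_1,\dots,g_k)$ of elements of $G$ is an irredundant generating sequence if $\langle g_1,\dots,g_k\rangle = G$ and $g_i \notin \langle g_j : j \neq i\rangle$ for every $i$. $m(G)$ denotes the maximal length of an irredundant generating sequence of $G$. An irredundant generating sequence $s=(g_1,\dots,g_k)$ satisfies the replacement property if for every nontrivial $g \in G$ there is an index $i$ such that $(g_1,\dots,g_{i-1},g,g_{i+1},\dots,g_k)$ generates $G$ (not necessarily irredundantly); a group $H$ satisfies the replacement property if every irredundant generating sequence of $H$ of length $m(H)$ does. A collection of subgroups $\{H_i\}_{i \in I}$ is in general position if for every $j \in I$, $\bigcap_{i\in I} H_i$ is properly contained in $\bigcap_{i \in I\setminus\{j\}} H_i$. A corresponding collection of maximal subgroups for $s$ is a sequence $(M_1,\dots,M_k)$ of maximal subgroups of $G$ with $M_i \supseteq \langle g_j : j \neq i\rangle$ for each $i$. *)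

theory Defs
  imports "HOL-Algebra.Algebra"
begin

text \<open>Sequences are lists of group elements; index i ranges over 0..<length s.\<close>

definition others :: "'a list \<Rightarrow> nat \<Rightarrow> 'a set" where
  "others s i = {s ! j | j. j < length s \<and> j \<noteq> i}"

definition irredundant_gen_seq :: "('a, 'b) monoid_scheme \<Rightarrow> 'a list \<Rightarrow> bool" where
  "irredundant_gen_seq G s \<longleftrightarrow>
     set s \<subseteq> carrier G \<and> generate G (set s) = carrier G \<and>
     (\<forall>i < length s. s ! i \<notin> generate G (others s i))"

definition m_len :: "('a, 'b) monoid_scheme \<Rightarrow> nat" where
  "m_len G = Max {length s | s. irredundant_gen_seq G s}"

definition seq_replacement :: "('a, 'b) monoid_scheme \<Rightarrow> 'a list \<Rightarrow> bool" where
  "seq_replacement G s \<longleftrightarrow>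
     (\<forall>g \<in> carrier G. g \<noteq> \<one>\<^bsub>G\<^esub> \<longrightarrow>
        (\<exists>i < length s. generate G (set (s[i := g])) = carrier G))"

definition group_replacement :: "('a, 'b) monoid_scheme \<Rightarrow> bool" where
  "group_replacement H \<longleftrightarrow>
     (\<forall>s. irredundant_gen_seq H s \<and> length s = m_len H \<longrightarrow> seq_replacement H s)"

definition maximal_subgroup :: "'a set \<Rightarrow> ('a, 'b) monoid_scheme \<Rightarrow> bool" where
  "maximal_subgroup M G \<longleftrightarrow> subgroup M G \<and> M \<noteq> carrier G \<and>
     (\<forall>H. subgroup H G \<and> M \<subseteq> H \<longrightarrow> H = M \<or> H = carrier G)"

text \<open>Intersections are taken inside carrier G (empty intersection = G).\<close>
definition general_position :: "('a, 'b) monoid_scheme \<Rightarrow> 'a set list \<Rightarrow> bool" where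
  "general_position G Ms \<longleftrightarrow>
     (\<forall>j < length Ms. carrier G \<inter> (\<Inter>i \<in> {..<length Ms}. Ms ! i)
        \<subset> carrier G \<inter> (\<Inter>i \<in> {..<length Ms} - {j}. Ms ! i))"

definition corresponding_maximals :: "('a, 'b) monoid_scheme \<Rightarrow> 'a list \<Rightarrow> 'a set list \<Rightarrow> bool" where
  "corresponding_maximals G s Ms \<longleftrightarrow> length Ms = length s \<and>
     (\<forall>i < length s. maximal_subgroup (Ms ! i) G \<and> generate G (others s i) \<subseteq> Ms ! i)"

end

theory Submission
  imports Defs
begin

lemma set_upd_others:
  assumes "i < length xs"
  shows "set (xs[i := x]) = insert x (others xs i)"
proof
  show "set (xs[i := x]) \<subseteq> insert x (others xs i)"
    using assms unfolding others_def by (auto simp: in_set_conv_nth nth_list_update split: if_splits)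
  show "insert x (others xs i) \<subseteq> set (xs[i := x])"
  proof
    fix y assume "y \<in> insert x (others xs i)"
    then consider "y = x" | j where "j < length xs" "j \<noteq> i" "y = xs ! j" unfolding others_def by auto
    thus "y \<in> set (xs[i := x])"
    proof cases
      case 1 thus ?thesis using assms by (simp add: set_update_memI)
    next
      case 2 thus ?thesis by (metis length_list_update nth_list_update_neq nth_mem)
    qed
  qed
qed

lemma others_sub_set: "others xs i \<subseteq> set xs"
  unfolding others_def by auto

lemma exists_maximal:
  assumes "group G" "finite (carrier G)" "subgroup K G" "K \<noteq> carrier G"
  shows "\<exists>M. maximal_subgroup M G \<and> K \<subseteq> M"
proof -
  define S where "S = {H. subgroup H G \<and> K \<subseteq> H \<and> H \<noteq> carrier G}"
  have "S \<subseteq> Pow (carrier G)"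
  proof
    fix H assume "H \<in> S" thus "H \<in> Pow (carrier G)" using subgroup.subset[of H G] by (simp add: S_def)
  qed
  hence fin: "finite S" by (rule finite_subset[OF _ finite_Pow_iff[THEN iffD2, OF assms(2)]])
  have K: "K \<in> S" using assms by (simp add: S_def)
  have "\<exists>m\<in>S. K \<le> m \<and> (\<forall>b\<in>S. m \<le> b \<longrightarrow> m = b)" by (rule finite_has_maximal2[OF fin K])
  then obtain M where M1: "M \<in> S" and M2': "K \<le> M \<and> (\<forall>b\<in>S. M \<le> b \<longrightarrow> M = b)" ..
  have M2: "\<And>b. b \<in> S \<Longrightarrow> M \<le> b \<Longrightarrow> M = b" using M2' by simp
  have "maximal_subgroup M G"
    unfolding maximal_subgroup_def
  proof (intro conjI allI impI)
    show "subgroup M G" "M \<noteq> carrier G" using M1 by (auto simp: S_def)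
  next
    fix H assume H: "subgroup H G \<and> M \<subseteq> H"
    show "H = M \<or> H = carrier G"
    proof (cases "H = carrier G")
      case False
      hence "H \<in> S" using H M1 by (auto simp: S_def)
      thus ?thesis using M2 H by auto
    qed simp
  qed
  thus ?thesis using M1 by (auto simp: S_def)
qed

theorem proposition3p2:
  fixes G :: "('a, 'b) monoid_scheme" and s :: "'a list" and k :: nat
  assumes "group G" and "finite (carrier G)"
    and "k = length s" and "k \<le> m_len G"
    and "irredundant_gen_seq G s"
    and "\<forall>Ms. corresponding_maximals G s Ms \<and> general_position G Ms \<longrightarrow>
           (\<exists>r < k. Ms ! r = generate G (others s r)
                  \<and> m_len (G\<lparr>carrier := Ms ! r\<rparr>) = k - 1
                  \<and> group_replacement (G\<lparr>carrier := Ms ! r\<rparr>))"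
  shows "seq_replacement G s"
proof -
  interpret group G by fact
  have sG: "set s \<subseteq> carrier G" and gen: "generate G (set s) = carrier G"
    and irr: "\<And>i. i < length s \<Longrightarrow> s ! i \<notin> generate G (others s i)"
    using assms(5) unfolding irredundant_gen_seq_def by auto
  have othG: "\<And>i. others s i \<subseteq> carrier G" by (rule subset_trans[OF others_sub_set sG])
  show ?thesis unfolding seq_replacement_def
  proof (intro ballI impI, rule ccontr)
    fix g assume g: "g \<in> carrier G" "g \<noteq> \<one>\<^bsub>G\<^esub>" and
      no: "\<not> (\<exists>i<length s. generate G (set (s[i := g])) = carrier G)"
    have updG: "\<And>i. set (s[i:=g]) \<subseteq> carrier G"
      using sG g by (meson set_update_subsetI)
    have "\<forall>i\<in>{..<k}. \<exists>M. maximal_subgroup M G \<and> generate G (set (s[i := g])) \<subseteq> M"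
    proof
      fix i assume "i \<in> {..<k}"
      hence "generate G (set (s[i := g])) \<noteq> carrier G" using no assms(3) by auto
      thus "\<exists>M. maximal_subgroup M G \<and> generate G (set (s[i := g])) \<subseteq> M"
        using exists_maximal[OF assms(1,2) generate_is_subgroup[OF updG]] by blast
    qed
    then obtain M where M: "\<And>i. i < k \<Longrightarrow> maximal_subgroup (M i) G \<and> generate G (set (s[i := g])) \<subseteq> M i"
      by (metis lessThan_iff)
    have Msub: "set (s[i := g]) \<subseteq> M i" if "i < k" for i
    proof
      fix x assume "x \<in> set (s[i := g])"
      hence "x \<in> generate G (set (s[i := g]))" by (rule generate.incl)
      thus "x \<in> M i" using M[OF that] by blast
    qed
    have updeq: "set (s[i := g]) = insert g (others s i)" if "i < k" for i
      using set_upd_others[of i s g] that assms(3) by simp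
    have oth_in: "\<And>i. i < k \<Longrightarrow> others s i \<subseteq> M i" "\<And>i. i < k \<Longrightarrow> g \<in> M i"
      using Msub updeq by auto
    have notin: "\<And>i. i < k \<Longrightarrow> s ! i \<notin> M i"
    proof
      fix i assume i: "i < k" "s ! i \<in> M i"
      have "set s \<subseteq> M i"
      proof
        fix x assume "x \<in> set s"
        then obtain j where "j < length s" "x = s ! j" by (auto simp: in_set_conv_nth)
        thus "x \<in> M i" using i oth_in(1)[OF i(1)] unfolding others_def by (cases "j = i") auto
      qed
      hence "carrier G \<subseteq> M i"
        using gen generate_subgroup_incl M[OF i(1)] unfolding maximal_subgroup_def by metis
      thus False using M[OF i(1)] subgroup.subset unfolding maximal_subgroup_def by blast
    qed
    define Ms where "Ms = map M [0..<k]"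
    have Msn: "\<And>i. i < k \<Longrightarrow> Ms ! i = M i" unfolding Ms_def by simp
    have lenMs: "length Ms = k" unfolding Ms_def by simp
    have cm: "corresponding_maximals G s Ms"
      unfolding corresponding_maximals_def
    proof (intro conjI allI impI)
      show "length Ms = length s" using lenMs assms(3) by simp
    next
      fix i assume i: "i < length s"
      show "maximal_subgroup (Ms ! i) G" using M Msn i assms(3) by simp
      show "generate G (others s i) \<subseteq> Ms ! i"
        using Msn i assms(3) M mono_generate set_upd_others by (metis subset_trans subset_insertI)
    qed
    have gp: "general_position G Ms"
      unfolding general_position_def lenMs
    proof (intro allI impI)
      fix j assume j: "j < k"
      have "s ! j \<in> carrier G \<inter> (\<Inter>i \<in> {..<k} - {j}. Ms ! i)"
      proof -
        have "s ! j \<in> carrier G" using sG j assms(3) by auto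
        moreover have "\<forall>i \<in> {..<k} - {j}. s ! j \<in> Ms ! i"
        proof
          fix i assume "i \<in> {..<k} - {j}"
          hence "i < k" "i \<noteq> j" by auto
          hence "s ! j \<in> others s i" using j assms(3) unfolding others_def by auto
          thus "s ! j \<in> Ms ! i" using oth_in(1) Msn \<open>i < k\<close> by auto
        qed
        ultimately show ?thesis by blast
      qed
      moreover have "s ! j \<notin> (\<Inter>i \<in> {..<k}. Ms ! i)"
        using notin[OF j] Msn[OF j] j by auto
      ultimately show "carrier G \<inter> (\<Inter>i \<in> {..<k}. Ms ! i) \<subset> carrier G \<inter> (\<Inter>i \<in> {..<k} - {j}. Ms ! i)"
        by blast
    qed
    obtain r where r: "r < k" "Ms ! r = generate G (others s r)"
        "m_len (G\<lparr>carrier := Ms ! r\<rparr>) = k - 1" "group_replacement (G\<lparr>carrier := Ms ! r\<rparr>)"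
      using assms(6) cm gp by blast
    define H where "H = Ms ! r"
    have Hsub: "subgroup H G" using r(2) othG generate_is_subgroup H_def by simp
    have gH: "g \<in> H" using oth_in(2)[OF r(1)] Msn[OF r(1)] H_def by simp
    have othH: "others s r \<subseteq> H"
    proof
      fix x assume "x \<in> others s r"
      hence "x \<in> generate G (others s r)" by (rule generate.incl)
      thus "x \<in> H" using r(2) H_def by simp
    qed
    define f where "f j = (if j < r then j else Suc j)" for j
    define t where "t = map (\<lambda>j. s ! f j) [0..<k-1]"
    have lent: "length t = k - 1" unfolding t_def by simp
    have tn: "\<And>j. j < k - 1 \<Longrightarrow> t ! j = s ! f j" unfolding t_def by simp
    have fk: "\<And>j. j < k - 1 \<Longrightarrow> f j < k \<and> f j \<noteq> r" unfolding f_def using r(1) by auto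
    have finj: "\<And>i j. f i = f j \<Longrightarrow> i = j" unfolding f_def by (auto split: if_splits)
    have fsurj: "\<And>i. i < k \<Longrightarrow> i \<noteq> r \<Longrightarrow> \<exists>j < k - 1. f j = i"
    proof -
      fix i assume i: "i < k" "i \<noteq> r"
      show "\<exists>j < k - 1. f j = i"
      proof (cases "i < r")
        case True thus ?thesis using r(1) unfolding f_def by (intro exI[of _ i]) auto
      next
        case False
        then obtain i' where "i = Suc i'" using i by (cases i) auto
        thus ?thesis using i False unfolding f_def by (intro exI[of _ i']) auto
      qed
    qed
    have sett: "set t = others s r"
    proof
      show "set t \<subseteq> others s r"
        using fk tn assms(3) unfolding others_def by (auto simp: in_set_conv_nth lent) metis
      show "others s r \<subseteq> set t"
      proof
        fix x assume "x \<in> others s r"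
        then obtain i where i: "i < k" "i \<noteq> r" "x = s ! i" using assms(3) unfolding others_def by auto
        then obtain j where "j < k - 1" "f j = i" using fsurj by blast
        thus "x \<in> set t" using i tn lent by (auto simp: in_set_conv_nth)
      qed
    qed
    have otht: "\<And>j. j < k - 1 \<Longrightarrow> others t j = {s ! f i | i. i < k - 1 \<and> i \<noteq> j}"
      unfolding others_def using tn lent by auto metis+
    have otht_sub: "\<And>j. j < k - 1 \<Longrightarrow> others t j \<subseteq> others s (f j) \<inter> others s r"
      using otht fk finj assms(3) unfolding others_def by auto
    let ?Gr = "G\<lparr>carrier := H\<rparr>"
    have irrt: "irredundant_gen_seq ?Gr t"
      unfolding irredundant_gen_seq_def
    proof (intro conjI allI impI)
      show "set t \<subseteq> carrier ?Gr" using sett othH by simp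
      show "generate ?Gr (set t) = carrier ?Gr"
        using sett generate_consistent[OF othH Hsub] r(2) H_def by simp
    next
      fix j assume j0: "j < length t"
      have j: "j < k - 1" using j0 lent by simp
      have oj: "others t j \<subseteq> H" using otht_sub[OF j] othH by blast
      have "generate ?Gr (others t j) = generate G (others t j)"
        using generate_consistent[OF oj Hsub] .
      also have "\<dots> \<subseteq> generate G (others s (f j))"
        using mono_generate otht_sub[OF j] by blast
      finally show "t ! j \<notin> generate ?Gr (others t j)"
        using irr[of "f j"] fk[OF j] tn[OF j] assms(3) by auto
    qed
    have "seq_replacement ?Gr t"
      using r(3,4) irrt lent H_def unfolding group_replacement_def by simp
    then obtain j where j: "j < k - 1" "generate ?Gr (set (t[j := g])) = H"
      unfolding seq_replacement_def using gH g lent by auto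
    have tjH: "set (t[j := g]) \<subseteq> H"
    proof -
      have "set (t[j := g]) = insert g (others t j)" using set_upd_others[of j t g] j lent by simp
      thus ?thesis using otht_sub[OF j(1)] othH gH by auto
    qed
    have genG: "generate G (set (t[j := g])) = H"
      using j(2) generate_consistent[OF tjH Hsub] by simp
    define i where "i = f j"
    have i: "i < k" "i \<noteq> r" using fk j i_def by auto
    let ?X = "set (s[i := g])"
    have Xsub: "subgroup (generate G ?X) G" using generate_is_subgroup[OF updG] .
    have "set (t[j := g]) \<subseteq> ?X"
    proof -
      have "set (t[j := g]) = insert g (others t j)" using set_upd_others[of j t g] j lent by simp
      thus ?thesis using updeq[OF i(1)] otht_sub[OF j(1)] i_def by auto
    qed
    hence "H \<subseteq> generate G ?X"
      using genG mono_generate by blast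
    moreover have "s ! r \<in> generate G ?X"
    proof -
      have "s ! r \<in> others s i" using i r(1) assms(3) unfolding others_def by auto
      hence "s ! r \<in> ?X" using updeq[OF i(1)] by simp
      thus ?thesis by (rule generate.incl)
    qed
    ultimately have "set s \<subseteq> generate G ?X"
    proof -
      assume A: "H \<subseteq> generate G ?X" "s ! r \<in> generate G ?X"
      show ?thesis
      proof
        fix x assume "x \<in> set s"
        then obtain l where "l < length s" "x = s ! l" by (auto simp: in_set_conv_nth)
        thus "x \<in> generate G ?X" using A othH unfolding others_def by (cases "l = r") auto
      qed
    qed
    hence "carrier G \<subseteq> generate G ?X"
      using gen generate_subgroup_incl[OF _ Xsub] by metis
    hence "generate G ?X = carrier G" using generate_incl[OF updG] by blast
    thus False using no i assms(3) by auto
  qed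
qed

end
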